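(* Let $(Y,\preceq,\prec,\to)$ be a solid vector space. The following are equivalent: (i) $Y$ is a normal vector space; (ii) the convergence in $Y$ is generated by a monotone norm on $Y$, i.e. there is a monotone norm $\|\cdot\|$ on $Y$ such that for all sequences $(x_n)$ and $x\in Y$, $x_n\to x$ iff $\|x_n-x\|\to0$; (iii) the convergence in $Y$ is generated by the order topology $\tau$ on $Y$, i.e. $x_n\to x$ iff $x_n\to x$ in $\tau$.
   Context: Vector space with convergence: a real vector space $Y$ with a relation $\to$ between sequences in $Y$ and points of $Y$ (uniqueness of limits not assumed) such that (C1) $x_n\to x$, $y_n\to y$ imply $x_n+y_n\to x+y$; (C2) $x_n\to x$, $\lambda\in\mathbb R$ imply $\lambda x_n\to\lambda x$; (C3) $\lambda_n\to\lambda$ in $\mathbb R$ imply $\lambda_n x\to\lambda x$. $A\subseteq Y$ is open if $x_n\to x\in A$ implies $x_n\in A$ for all but finitely many $n$; closed if $x_n\to x$, $x_n\in A$ $\forall n$ imply $x\in A$; $A^\circ$ is the union of all open subsets of $A$. A cone is a nonempty closed $K$ with $\lambda K\subseteq K$ ($\lambda\ge0$), $K+K\subseteq K$, $K\cap(-K)=\{0\}$; solid if $K\ne\{0\}$, $K^\circ\ne\emptyset$. A vector ordering is a partial order $\preceq$ with (V1) $x\preceq y\Rightarrow x+z\preceq y+z$; (V2) $\lambda\ge0$, $x\preceq y\Rightarrow\lambda x\preceq\lambda y$; (V3) $x_n\to x$, $y_n\to y$, $x_n\preceq y_n$ $\forall n\Rightarrow x\preceq y$. Solid vector space: positive cone $K=\{x:x\succeq0\}$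 solid, with $x\prec y$ iff $y-x\in K^\circ$. Normal: whenever $x_n\preceq y_n\preceq z_n$ for all $n$, $x_n\to x$ and $z_n\to x$, then $y_n\to x$. Monotone norm: $\|x\|\le\|y\|$ whenever $0\preceq x\preceq y$. Order topology: basis the open intervals $(a,b)=\{x:a\prec x\prec b\}$, $a\prec b$. *)

theory Defs
  imports "HOL-Analysis.Analysis"
begin

definition vs_convergence :: "((nat \<Rightarrow> 'a::real_vector) \<Rightarrow> 'a \<Rightarrow> bool) \<Rightarrow> bool" where
  "vs_convergence conv \<longleftrightarrow>
     (\<forall>x y a b. conv x a \<and> conv y b \<longrightarrow> conv (\<lambda>n. x n + y n) (a + b)) \<and>
     (\<forall>x a (c::real). conv x a \<longrightarrow> conv (\<lambda>n. c *\<^sub>R x n) (c *\<^sub>R a)) \<and>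
     (\<forall>(l::nat \<Rightarrow> real) c z. l \<longlonglongrightarrow> c \<longrightarrow> conv (\<lambda>n. l n *\<^sub>R z) (c *\<^sub>R z))"

definition conv_open :: "((nat \<Rightarrow> 'a) \<Rightarrow> 'a \<Rightarrow> bool) \<Rightarrow> 'a set \<Rightarrow> bool" where
  "conv_open conv A \<longleftrightarrow> (\<forall>x a. conv x a \<and> a \<in> A \<longrightarrow> (\<forall>\<^sub>F n in sequentially. x n \<in> A))"

definition conv_closed :: "((nat \<Rightarrow> 'a) \<Rightarrow> 'a \<Rightarrow> bool) \<Rightarrow> 'a set \<Rightarrow> bool" where
  "conv_closed conv A \<longleftrightarrow> (\<forall>x a. conv x a \<and> (\<forall>n. x n \<in> A) \<longrightarrow> a \<in> A)"

definition conv_interior :: "((nat \<Rightarrow> 'a) \<Rightarrow> 'a \<Rightarrow> bool) \<Rightarrow> 'a set \<Rightarrow> 'a set" where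
  "conv_interior conv A = \<Union>{U. U \<subseteq> A \<and> conv_open conv U}"

definition conv_cone :: "((nat \<Rightarrow> 'a::real_vector) \<Rightarrow> 'a \<Rightarrow> bool) \<Rightarrow> 'a set \<Rightarrow> bool" where
  "conv_cone conv K \<longleftrightarrow> K \<noteq> {} \<and> conv_closed conv K \<and>
     (\<forall>c::real. \<forall>x\<in>K. c \<ge> 0 \<longrightarrow> c *\<^sub>R x \<in> K) \<and>
     (\<forall>x\<in>K. \<forall>y\<in>K. x + y \<in> K) \<and> K \<inter> uminus ` K = {0}"

definition solid_cone :: "((nat \<Rightarrow> 'a::real_vector) \<Rightarrow> 'a \<Rightarrow> bool) \<Rightarrow> 'a set \<Rightarrow> bool" where
  "solid_cone conv K \<longleftrightarrow> conv_cone conv K \<and> K \<noteq> {0} \<and> conv_interior conv K \<noteq> {}"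

definition vector_ordering ::
  "((nat \<Rightarrow> 'a::real_vector) \<Rightarrow> 'a \<Rightarrow> bool) \<Rightarrow> ('a \<Rightarrow> 'a \<Rightarrow> bool) \<Rightarrow> bool" where
  "vector_ordering conv le \<longleftrightarrow>
     (\<forall>x. le x x) \<and> (\<forall>x y z. le x y \<and> le y z \<longrightarrow> le x z) \<and> (\<forall>x y. le x y \<and> le y x \<longrightarrow> x = y) \<and>
     (\<forall>x y z. le x y \<longrightarrow> le (x + z) (y + z)) \<and>
     (\<forall>(c::real) x y. c \<ge> 0 \<and> le x y \<longrightarrow> le (c *\<^sub>R x) (c *\<^sub>R y)) \<and>
     (\<forall>x y a b. conv x a \<and> conv y b \<and> (\<forall>n. le (x n) (y n)) \<longrightarrow> le a b)"

definition pos_cone :: "('a::real_vector \<Rightarrow> 'a \<Rightarrow> bool) \<Rightarrow> 'a set" where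
  "pos_cone le = {x. le 0 x}"

definition solid_vector_space ::
  "((nat \<Rightarrow> 'a::real_vector) \<Rightarrow> 'a \<Rightarrow> bool) \<Rightarrow> ('a \<Rightarrow> 'a \<Rightarrow> bool) \<Rightarrow> ('a \<Rightarrow> 'a \<Rightarrow> bool) \<Rightarrow> bool" where
  "solid_vector_space conv le lt \<longleftrightarrow>
     vs_convergence conv \<and> vector_ordering conv le \<and> solid_cone conv (pos_cone le) \<and>
     (\<forall>x y. lt x y \<longleftrightarrow> y - x \<in> conv_interior conv (pos_cone le))"

definition normal_space ::
  "((nat \<Rightarrow> 'a) \<Rightarrow> 'a \<Rightarrow> bool) \<Rightarrow> ('a \<Rightarrow> 'a \<Rightarrow> bool) \<Rightarrow> bool" where
  "normal_space conv le \<longleftrightarrow>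
     (\<forall>x y z a. (\<forall>n. le (x n) (y n) \<and> le (y n) (z n)) \<and> conv x a \<and> conv z a \<longrightarrow> conv y a)"

definition is_norm :: "('a::real_vector \<Rightarrow> real) \<Rightarrow> bool" where
  "is_norm N \<longleftrightarrow> (\<forall>x. N x \<ge> 0) \<and> (\<forall>x. N x = 0 \<longleftrightarrow> x = 0) \<and>
     (\<forall>(c::real) x. N (c *\<^sub>R x) = \<bar>c\<bar> * N x) \<and> (\<forall>x y. N (x + y) \<le> N x + N y)"

definition monotone_norm :: "('a::real_vector \<Rightarrow> 'a \<Rightarrow> bool) \<Rightarrow> ('a \<Rightarrow> real) \<Rightarrow> bool" where
  "monotone_norm le N \<longleftrightarrow> is_norm N \<and> (\<forall>x y. le 0 x \<and> le x y \<longrightarrow> N x \<le> N y)"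

definition order_topology_of :: "('a \<Rightarrow> 'a \<Rightarrow> bool) \<Rightarrow> 'a topology" where
  "order_topology_of lt = topology_generated_by {{x. lt a x \<and> lt x b} | a b. lt a b}"

end

theory Submission imports Defs begin

locale svs =
  fixes conv :: "(nat \<Rightarrow> 'a::real_vector) \<Rightarrow> 'a \<Rightarrow> bool"
    and le lt :: "'a \<Rightarrow> 'a \<Rightarrow> bool"
  assumes svs: "solid_vector_space conv le lt"
begin

definition "K = pos_cone le"
definition "Kint = conv_interior conv K"

lemma VC: "vs_convergence conv" using svs unfolding solid_vector_space_def by blast
lemma VO: "vector_ordering conv le" using svs unfolding solid_vector_space_def by blast
lemma lt_iff: "lt x y \<longleftrightarrow> y - x \<in> Kint" using svs unfolding solid_vector_space_def Kint_def K_def by blast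
lemma Kint_ne: "Kint \<noteq> {}" using svs unfolding solid_vector_space_def solid_cone_def Kint_def K_def by blast

lemma conv_add: "conv x a \<Longrightarrow> conv y b \<Longrightarrow> conv (\<lambda>n. x n + y n) (a + b)"
  using VC unfolding vs_convergence_def by blast
lemma conv_scale: "conv x a \<Longrightarrow> conv (\<lambda>n. c *\<^sub>R x n) (c *\<^sub>R a)"
  using VC unfolding vs_convergence_def by blast
lemma conv_seq: "l \<longlonglongrightarrow> c \<Longrightarrow> conv (\<lambda>n. l n *\<^sub>R z) (c *\<^sub>R z)"
  using VC unfolding vs_convergence_def by blast
lemma conv_const: "conv (\<lambda>n. z) z"
  using conv_seq[of "\<lambda>n. 1" 1 z] by simp
lemma conv_diff: "conv x a \<Longrightarrow> conv y b \<Longrightarrow> conv (\<lambda>n. x n - y n) (a - b)"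
  using conv_add[of x a "\<lambda>n. (-1) *\<^sub>R y n" "(-1) *\<^sub>R b"] conv_scale[of y b "-1"] by simp
lemma conv_diff_const: "conv x a \<Longrightarrow> conv (\<lambda>n. x n - p) (a - p)"
  using conv_diff[OF _ conv_const] by blast
lemma conv_const_diff: "conv x a \<Longrightarrow> conv (\<lambda>n. q - x n) (q - a)"
  using conv_diff[OF conv_const] by blast

lemma le_refl: "le x x" using VO unfolding vector_ordering_def by blast
lemma le_trans: "le x y \<Longrightarrow> le y z \<Longrightarrow> le x z" using VO unfolding vector_ordering_def by blast
lemma le_antisym: "le x y \<Longrightarrow> le y x \<Longrightarrow> x = y" using VO unfolding vector_ordering_def by blast
lemma le_add: "le x y \<Longrightarrow> le (x + z) (y + z)" using VO unfolding vector_ordering_def by blast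
lemma le_scale: "c \<ge> 0 \<Longrightarrow> le x y \<Longrightarrow> le (c *\<^sub>R x) (c *\<^sub>R y)" using VO unfolding vector_ordering_def by blast
lemma le_lim: "conv x a \<Longrightarrow> conv y b \<Longrightarrow> (\<And>n. le (x n) (y n)) \<Longrightarrow> le a b"
  using VO unfolding vector_ordering_def by blast

lemma le_iff_sub: "le x y \<longleftrightarrow> le 0 (y - x)"
proof
  assume "le x y" then show "le 0 (y - x)" using le_add[of x y "-x"] by simp
next
  assume "le 0 (y - x)" then show "le x y" using le_add[of 0 "y - x" x] by simp
qed

lemma le_neg: "le x y \<Longrightarrow> le (-y) (-x)"
  by (metis le_iff_sub diff_minus_eq_add uminus_add_conv_diff)

lemma le_add2: "le a b \<Longrightarrow> le c d \<Longrightarrow> le (a + c) (b + d)"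
  by (metis le_add le_trans add.commute)

lemma K_iff: "v \<in> K \<longleftrightarrow> le 0 v" unfolding K_def pos_cone_def by simp

lemma Kint_sub: "Kint \<subseteq> K" unfolding Kint_def conv_interior_def by blast

lemma Kint_le: "v \<in> Kint \<Longrightarrow> le 0 v" using Kint_sub K_iff by blast

lemma lt_le: "lt x y \<Longrightarrow> le x y" using lt_iff Kint_le le_iff_sub by blast

lemma Kint_open: "v \<in> Kint \<Longrightarrow> conv y v \<Longrightarrow> eventually (\<lambda>n. y n \<in> Kint) sequentially"
proof -
  assume v: "v \<in> Kint" and c: "conv y v"
  then obtain U where U: "U \<subseteq> K" "conv_open conv U" "v \<in> U"
    unfolding Kint_def conv_interior_def by blast
  then have "eventually (\<lambda>n. y n \<in> U) sequentially" using c unfolding conv_open_def by blast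
  moreover have "U \<subseteq> Kint" using U unfolding Kint_def conv_interior_def by blast
  ultimately show ?thesis by (auto elim: eventually_mono)
qed

lemma Kint_scale: assumes "v \<in> Kint" "c > 0" shows "c *\<^sub>R v \<in> Kint"
proof -
  obtain U where U: "U \<subseteq> K" "conv_open conv U" "v \<in> U"
    using assms unfolding Kint_def conv_interior_def by blast
  define U' where "U' = (\<lambda>u. c *\<^sub>R u) ` U"
  have "U' \<subseteq> K"
  proof
    fix w assume "w \<in> U'"
    then obtain u where "u \<in> U" "w = c *\<^sub>R u" unfolding U'_def by blast
    then show "w \<in> K" using U(1) K_iff le_scale[of c 0 u] assms(2) by auto
  qed
  moreover have "conv_open conv U'" unfolding conv_open_def
  proof (intro allI impI)
    fix y b assume h: "conv y b \<and> b \<in> U'"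
    then obtain u where u: "u \<in> U" "b = c *\<^sub>R u" unfolding U'_def by blast
    have "conv (\<lambda>n. inverse c *\<^sub>R y n) u" using conv_scale[of y b "inverse c"] h u assms(2) by simp
    then have "eventually (\<lambda>n. inverse c *\<^sub>R y n \<in> U) sequentially" using U u unfolding conv_open_def by blast
    then show "eventually (\<lambda>n. y n \<in> U') sequentially"
    proof (rule eventually_mono)
      fix n assume "inverse c *\<^sub>R y n \<in> U"
      then have "c *\<^sub>R (inverse c *\<^sub>R y n) \<in> U'" unfolding U'_def by blast
      then show "y n \<in> U'" using assms(2) by simp
    qed
  qed
  moreover have "c *\<^sub>R v \<in> U'" using U unfolding U'_def by blast
  ultimately show ?thesis unfolding Kint_def conv_interior_def by blast
qed

lemma Kint_add: assumes "v \<in> Kint" "k \<in> K" shows "v + k \<in> Kint"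
proof -
  obtain U where U: "U \<subseteq> K" "conv_open conv U" "v \<in> U"
    using assms unfolding Kint_def conv_interior_def by blast
  define U' where "U' = (\<lambda>u. u + k) ` U"
  have "U' \<subseteq> K"
  proof
    fix w assume "w \<in> U'"
    then obtain u where "u \<in> U" "w = u + k" unfolding U'_def by blast
    then show "w \<in> K" using U(1) K_iff le_add2[of 0 u 0 k] assms(2) by auto
  qed
  moreover have "conv_open conv U'" unfolding conv_open_def
  proof (intro allI impI)
    fix y b assume h: "conv y b \<and> b \<in> U'"
    then obtain u where u: "u \<in> U" "b = u + k" unfolding U'_def by blast
    have "conv (\<lambda>n. y n - k) u" using conv_diff_const[of y b k] h u by simp
    then have "eventually (\<lambda>n. y n - k \<in> U) sequentially" using U u unfolding conv_open_def by blast
    then show "eventually (\<lambda>n. y n \<in> U') sequentially"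
    proof (rule eventually_mono)
      fix n assume "y n - k \<in> U"
      then have "(y n - k) + k \<in> U'" unfolding U'_def by blast
      then show "y n \<in> U'" by simp
    qed
  qed
  moreover have "v + k \<in> U'" using U unfolding U'_def by blast
  ultimately show ?thesis unfolding Kint_def conv_interior_def by blast
qed


definition "e = (SOME e. e \<in> Kint)"
lemma e_int: "e \<in> Kint" unfolding e_def using Kint_ne some_in_eq by blast
lemma e_pos: "le 0 e" using e_int Kint_le by blast
lemma te_pos: "t \<ge> 0 \<Longrightarrow> le 0 (t *\<^sub>R e)" using le_scale[OF _ e_pos, of t] by simp
lemma te_neg: "t \<ge> 0 \<Longrightarrow> le (-(t *\<^sub>R e)) 0" using le_neg[OF te_pos, of t] by simp

definition "T x = {t. 0 \<le> t \<and> le (-(t *\<^sub>R e)) x \<and> le x (t *\<^sub>R e)}"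
definition "N x = Inf (T x)"

lemma T_ne: "T x \<noteq> {}"
proof -
  let ?c = "\<lambda>n. inverse (real (Suc n))"
  have c0: "conv (\<lambda>n. ?c n *\<^sub>R x) 0"
    using conv_seq[OF LIMSEQ_inverse_real_of_nat, of x] by simp
  have d1: "conv (\<lambda>n. e - ?c n *\<^sub>R x) e" using conv_const_diff[OF c0, of e] by simp
  have d2: "conv (\<lambda>n. e + ?c n *\<^sub>R x) e" using conv_add[OF conv_const c0, of e] by simp
  have "eventually (\<lambda>n. e - ?c n *\<^sub>R x \<in> Kint) sequentially"
    using Kint_open[OF e_int d1] by simp
  moreover have "eventually (\<lambda>n. e + ?c n *\<^sub>R x \<in> Kint) sequentially"
    using Kint_open[OF e_int d2] by simp
  ultimately have "eventually (\<lambda>n. e - ?c n *\<^sub>R x \<in> Kint \<and> e + ?c n *\<^sub>R x \<in> Kint) sequentially"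
    by (rule eventually_conj)
  then obtain n where n: "e - ?c n *\<^sub>R x \<in> Kint" "e + ?c n *\<^sub>R x \<in> Kint"
    unfolding eventually_sequentially by blast
  define t where "t = real (Suc n)"
  have tp: "t > 0" unfolding t_def by simp
  have "le (?c n *\<^sub>R x) e" using Kint_le[OF n(1)] le_iff_sub by blast
  have "le (t *\<^sub>R (?c n *\<^sub>R x)) (t *\<^sub>R e)" by (rule le_scale) (use tp \<open>le (?c n *\<^sub>R x) e\<close> in auto)
  then have 1: "le x (t *\<^sub>R e)" unfolding t_def by simp
  have "le (-e) (?c n *\<^sub>R x)" using Kint_le[OF n(2)] le_iff_sub[of "-e" "?c n *\<^sub>R x"] by (simp add: add.commute)
  have "le (t *\<^sub>R (-e)) (t *\<^sub>R (?c n *\<^sub>R x))" by (rule le_scale) (use tp \<open>le (-e) (?c n *\<^sub>R x)\<close> in auto)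
  then have 2: "le (-(t *\<^sub>R e)) x" unfolding t_def by simp
  show ?thesis using 1 2 tp unfolding T_def by (auto intro!: exI[of _ t])
qed

lemma T_bdd: "bdd_below (T x)" unfolding T_def bdd_below_def by auto

lemma T_up: "t \<in> T x \<Longrightarrow> t \<le> s \<Longrightarrow> s \<in> T x"
proof -
  assume t: "t \<in> T x" and ts: "t \<le> s"
  have "le (t *\<^sub>R e) (s *\<^sub>R e)" using te_pos[of "s - t"] ts le_iff_sub[of "t *\<^sub>R e"]
    by (simp add: scaleR_diff_left)
  then show "s \<in> T x" using t ts le_neg unfolding T_def by (auto intro: le_trans)
qed

lemma N_nonneg: "0 \<le> N x" unfolding N_def using T_ne by (rule cInf_greatest) (auto simp: T_def)

lemma N_le: "t \<in> T x \<Longrightarrow> N x \<le> t" unfolding N_def by (rule cInf_lower[OF _ T_bdd])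

lemma N_in: "N x \<in> T x"
proof -
  define t where "t n = N x + inverse (real (Suc n))" for n
  have tT: "t n \<in> T x" for n
  proof -
    have "Inf (T x) < t n" unfolding t_def N_def by simp
    then obtain s where "s \<in> T x" "s < t n" using cInf_less_iff[OF T_ne T_bdd] by blast
    then show ?thesis using T_up by auto
  qed
  have tl: "t \<longlonglongrightarrow> N x" unfolding t_def
    using tendsto_add[OF tendsto_const LIMSEQ_inverse_real_of_nat] by simp
  have c1: "conv (\<lambda>n. t n *\<^sub>R e) (N x *\<^sub>R e)" by (rule conv_seq[OF tl])
  have c2: "conv (\<lambda>n. (- t n) *\<^sub>R e) ((- N x) *\<^sub>R e)" by (rule conv_seq[OF tendsto_minus[OF tl]])
  have "le x (N x *\<^sub>R e)" using le_lim[OF conv_const c1, of x] tT unfolding T_def by blast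
  moreover have "le ((- N x) *\<^sub>R e) x" using le_lim[OF c2 conv_const, of x] tT unfolding T_def by simp
  ultimately show ?thesis using N_nonneg unfolding T_def by simp
qed

lemma N_char: "0 \<le> t \<Longrightarrow> t \<in> T x \<longleftrightarrow> N x \<le> t"
  using N_le N_in T_up by blast

lemma N_bounds: "le (-(N x *\<^sub>R e)) x" "le x (N x *\<^sub>R e)"
  using N_in unfolding T_def by auto

lemma N_zero: "N x = 0 \<longleftrightarrow> x = 0"
proof
  assume "N x = 0" then show "x = 0" using N_bounds[of x] le_antisym by simp
next
  assume "x = 0"
  then have "0 \<in> T x" unfolding T_def using le_refl by simp
  then show "N x = 0" using N_le N_nonneg by (meson order_antisym)
qed

lemma N_scale_le: "N (c *\<^sub>R x) \<le> \<bar>c\<bar> * N x"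
proof -
  let ?t = "N x"
  have b1: "le (-(?t *\<^sub>R e)) x" and b2: "le x (?t *\<^sub>R e)" using N_bounds by auto
  have "\<bar>c\<bar> * ?t \<in> T (c *\<^sub>R x)"
  proof (cases "c \<ge> 0")
    case True
    have "le (c *\<^sub>R (-(?t *\<^sub>R e))) (c *\<^sub>R x)" using le_scale[OF True b1] .
    moreover have "le (c *\<^sub>R x) (c *\<^sub>R (?t *\<^sub>R e))" using le_scale[OF True b2] .
    ultimately show ?thesis using True N_nonneg unfolding T_def by simp
  next
    case False
    then have c: "-c \<ge> 0" by simp
    have "le ((-c) *\<^sub>R (-(?t *\<^sub>R e))) ((-c) *\<^sub>R (-x))" using le_scale[OF c le_neg[OF b2]] .
    moreover have "le ((-c) *\<^sub>R (-x)) ((-c) *\<^sub>R (?t *\<^sub>R e))" using le_scale[OF c le_neg[OF b1]] by simp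
    ultimately show ?thesis using False N_nonneg[of x] unfolding T_def by (simp add: mult_nonpos_nonneg)
  qed
  then show ?thesis by (rule N_le)
qed

lemma N_scale: "N (c *\<^sub>R x) = \<bar>c\<bar> * N x"
proof (cases "c = 0")
  case True then show ?thesis using N_zero by simp
next
  case False
  have "N x = N (inverse c *\<^sub>R (c *\<^sub>R x))" using False by simp
  also have "\<dots> \<le> \<bar>inverse c\<bar> * N (c *\<^sub>R x)" by (rule N_scale_le)
  finally have "\<bar>c\<bar> * N x \<le> \<bar>c\<bar> * (\<bar>inverse c\<bar> * N (c *\<^sub>R x))"
    by (simp add: mult_left_mono)
  also have "\<dots> = N (c *\<^sub>R x)" using False by (simp add: abs_inverse)
  finally show ?thesis using N_scale_le[of c x] by simp
qed

lemma N_tri: "N (x + y) \<le> N x + N y"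
proof -
  have "N x + N y \<in> T (x + y)"
    using le_add2[OF N_bounds(1)[of x] N_bounds(1)[of y]] le_add2[OF N_bounds(2)[of x] N_bounds(2)[of y]]
      N_nonneg[of x] N_nonneg[of y]
    unfolding T_def by (simp add: scaleR_add_left)
  then show ?thesis by (rule N_le)
qed

lemma N_mono: "le 0 x \<Longrightarrow> le x y \<Longrightarrow> N x \<le> N y"
proof -
  assume 0: "le 0 x" and xy: "le x y"
  have "N y \<in> T x" unfolding T_def using N_nonneg[of y] le_trans[OF te_neg[OF N_nonneg[of y]] 0]
     le_trans[OF xy N_bounds(2)[of y]] by simp
  then show ?thesis by (rule N_le)
qed

lemma N_monotone: "monotone_norm le N"
  unfolding monotone_norm_def is_norm_def using N_nonneg N_zero N_scale N_tri N_mono by blast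


lemma lt_trans: "lt p a \<Longrightarrow> lt a q \<Longrightarrow> lt p q"
  using Kint_add[of "q - a" "a - p"] lt_iff Kint_le K_iff by (simp add: algebra_simps)

lemma lt_le_trans: "lt p a \<Longrightarrow> le a b \<Longrightarrow> lt p b"
  using Kint_add[of "a - p" "b - a"] lt_iff le_iff_sub K_iff by (simp add: algebra_simps)

lemma le_lt_trans: "le a b \<Longrightarrow> lt b q \<Longrightarrow> lt a q"
  using Kint_add[of "q - b" "b - a"] lt_iff le_iff_sub K_iff by (simp add: algebra_simps)

lemma ev_lo: "conv x a \<Longrightarrow> lt p a \<Longrightarrow> eventually (\<lambda>n. lt p (x n)) sequentially"
  using Kint_open[of "a - p" "\<lambda>n. x n - p"] conv_diff_const lt_iff by simp

lemma ev_hi: "conv x a \<Longrightarrow> lt a q \<Longrightarrow> eventually (\<lambda>n. lt (x n) q) sequentially"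
  using Kint_open[of "q - a" "\<lambda>n. q - x n"] conv_const_diff lt_iff by simp

lemma eps_lt: "\<epsilon> > 0 \<Longrightarrow> lt (a - \<epsilon> *\<^sub>R e) a \<and> lt a (a + \<epsilon> *\<^sub>R e)"
  using Kint_scale[OF e_int] lt_iff by simp

lemma interval_N: "lt (a - \<epsilon> *\<^sub>R e) v \<Longrightarrow> lt v (a + \<epsilon> *\<^sub>R e) \<Longrightarrow> 0 \<le> \<epsilon> \<Longrightarrow> N (v - a) \<le> \<epsilon>"
proof -
  assume 1: "lt (a - \<epsilon> *\<^sub>R e) v" and 2: "lt v (a + \<epsilon> *\<^sub>R e)" and 3: "0 \<le> \<epsilon>"
  have "le (a - \<epsilon> *\<^sub>R e) v" "le v (a + \<epsilon> *\<^sub>R e)" using 1 2 lt_le by auto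
  then have "le (-(\<epsilon> *\<^sub>R e)) (v - a)" "le (v - a) (\<epsilon> *\<^sub>R e)"
    using le_iff_sub[of "a - \<epsilon> *\<^sub>R e" v] le_iff_sub[of v "a + \<epsilon> *\<^sub>R e"]
      le_iff_sub[of "-(\<epsilon> *\<^sub>R e)" "v - a"] le_iff_sub[of "v - a" "\<epsilon> *\<^sub>R e"]
    by (simp_all add: algebra_simps)
  then have "\<epsilon> \<in> T (v - a)" using 3 unfolding T_def by simp
  then show ?thesis by (rule N_le)
qed

lemma ev_le_tendsto: fixes f :: "nat \<Rightarrow> real"
  assumes "\<And>\<epsilon>. \<epsilon> > 0 \<Longrightarrow> eventually (\<lambda>n. f n \<le> \<epsilon>) sequentially" "\<And>n. 0 \<le> f n"
  shows "f \<longlonglongrightarrow> 0"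
proof (rule tendstoI)
  fix \<epsilon> :: real assume "\<epsilon> > 0"
  then have "eventually (\<lambda>n. f n \<le> \<epsilon>/2) sequentially" using assms(1)[of "\<epsilon>/2"] by simp
  then show "eventually (\<lambda>n. dist (f n) 0 < \<epsilon>) sequentially"
    by (rule eventually_mono) (use assms(2) \<open>\<epsilon> > 0\<close> in auto)
qed

lemma conv_N: "conv x a \<Longrightarrow> (\<lambda>n. N (x n - a)) \<longlonglongrightarrow> 0"
proof (rule ev_le_tendsto)
  fix \<epsilon> :: real assume c: "conv x a" and p: "\<epsilon> > 0"
  have "eventually (\<lambda>n. lt (a - \<epsilon> *\<^sub>R e) (x n) \<and> lt (x n) (a + \<epsilon> *\<^sub>R e)) sequentially"
    using eventually_conj[OF ev_lo[OF c] ev_hi[OF c]] eps_lt[OF p] by blast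
  then show "eventually (\<lambda>n. N (x n - a) \<le> \<epsilon>) sequentially"
    by (rule eventually_mono) (use interval_N p in auto)
qed (rule N_nonneg)

lemma N_conv: assumes nm: "normal_space conv le" and t: "(\<lambda>n. N (x n - a)) \<longlonglongrightarrow> 0"
  shows "conv x a"
proof -
  define t where "t n = N (x n - a)" for n
  have c1: "conv (\<lambda>n. (- t n) *\<^sub>R e) 0" using conv_seq[OF tendsto_minus[OF t], of e] unfolding t_def by simp
  have c2: "conv (\<lambda>n. t n *\<^sub>R e) 0" using conv_seq[OF t, of e] unfolding t_def by simp
  have "\<forall>n. le ((- t n) *\<^sub>R e) (x n - a) \<and> le (x n - a) (t n *\<^sub>R e)"
    using N_bounds unfolding t_def by simp
  moreover have imp: "(\<forall>n. le (X n) (Y n) \<and> le (Y n) (Z n)) \<and> conv X a' \<and> conv Z a' \<longrightarrow> conv Y a'"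
    for X Y Z a' using nm unfolding normal_space_def by blast
  ultimately have "conv (\<lambda>n. x n - a) 0"
    using imp[of "\<lambda>n. (- t n) *\<^sub>R e" "\<lambda>n. x n - a" "\<lambda>n. t n *\<^sub>R e" 0] c1 c2 by blast
  from conv_add[OF this conv_const[of a]] show ?thesis by simp
qed

definition "Bs = {{x. lt p x \<and> lt x q} | p q. lt p q}"

lemma in_UBs: "a \<in> \<Union>Bs"
proof -
  have "lt (a - e) a" "lt a (a + e)" using eps_lt[of 1 a] by auto
  then show ?thesis unfolding Bs_def using lt_trans by blast
qed

end

lemma limitin_generated:
  assumes "a \<in> \<Union>B"
  shows "limitin (topology_generated_by B) f a sequentially \<longleftrightarrow>
    (\<forall>U\<in>B. a \<in> U \<longrightarrow> eventually (\<lambda>n. f n \<in> U) sequentially)"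
proof
  assume "limitin (topology_generated_by B) f a sequentially"
  then show "\<forall>U\<in>B. a \<in> U \<longrightarrow> eventually (\<lambda>n. f n \<in> U) sequentially"
    unfolding limitin_def using topology_generated_by_Basis by blast
next
  assume h: "\<forall>U\<in>B. a \<in> U \<longrightarrow> eventually (\<lambda>n. f n \<in> U) sequentially"
  have "generate_topology_on B U \<Longrightarrow> a \<in> U \<Longrightarrow> eventually (\<lambda>n. f n \<in> U) sequentially" for U
  proof (induction rule: generate_topology_on.induct)
    case Empty then show ?case by simp
  next
    case (Int a' b') then show ?case using eventually_conj by fastforce
  next
    case (UN K)
    then obtain k where "k \<in> K" "a \<in> k" by blast
    with UN have "eventually (\<lambda>n. f n \<in> k) sequentially" by blast
    then show ?case by (rule eventually_mono) (use \<open>k \<in> K\<close> in blast)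
  next
    case (Basis s) then show ?case using h by blast
  qed
  then show "limitin (topology_generated_by B) f a sequentially"
    unfolding limitin_def using assms openin_topology_generated_by_iff by auto
qed

context svs begin

lemma limitin_iff: "limitin (order_topology_of lt) f a sequentially \<longleftrightarrow>
   (\<forall>p q. lt p a \<longrightarrow> lt a q \<longrightarrow> eventually (\<lambda>n. lt p (f n) \<and> lt (f n) q) sequentially)"
proof -
  have L: "limitin (order_topology_of lt) f a sequentially \<longleftrightarrow>
     (\<forall>U\<in>Bs. a \<in> U \<longrightarrow> eventually (\<lambda>n. f n \<in> U) sequentially)"
    using limitin_generated[OF in_UBs, of f] unfolding order_topology_of_def Bs_def by simp
  show ?thesis unfolding L
  proof (intro iffI allI impI ballI)
    fix p q assume h: "\<forall>U\<in>Bs. a \<in> U \<longrightarrow> eventually (\<lambda>n. f n \<in> U) sequentially" "lt p a" "lt a q"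
    have "{x. lt p x \<and> lt x q} \<in> Bs" unfolding Bs_def using lt_trans h by blast
    with h show "eventually (\<lambda>n. lt p (f n) \<and> lt (f n) q) sequentially" by auto
  next
    fix U assume h: "\<forall>p q. lt p a \<longrightarrow> lt a q \<longrightarrow> eventually (\<lambda>n. lt p (f n) \<and> lt (f n) q) sequentially"
      "U \<in> Bs" "a \<in> U"
    then obtain p q where "U = {x. lt p x \<and> lt x q}" unfolding Bs_def by blast
    with h show "eventually (\<lambda>n. f n \<in> U) sequentially" by auto
  qed
qed

lemma conv_limitin: "conv x a \<Longrightarrow> limitin (order_topology_of lt) x a sequentially"
  unfolding limitin_iff using ev_lo ev_hi eventually_conj by blast

lemma limitin_N: assumes "limitin (order_topology_of lt) x a sequentially"
  shows "(\<lambda>n. N (x n - a)) \<longlonglongrightarrow> 0"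
proof (rule ev_le_tendsto)
  fix \<epsilon> :: real assume p: "\<epsilon> > 0"
  have "eventually (\<lambda>n. lt (a - \<epsilon> *\<^sub>R e) (x n) \<and> lt (x n) (a + \<epsilon> *\<^sub>R e)) sequentially"
    using assms eps_lt[OF p] unfolding limitin_iff by blast
  then show "eventually (\<lambda>n. N (x n - a) \<le> \<epsilon>) sequentially"
    by (rule eventually_mono) (use interval_N p in auto)
qed (rule N_nonneg)

lemma topo_normal: assumes h: "\<forall>x a. conv x a \<longleftrightarrow> limitin (order_topology_of lt) x a sequentially"
  shows "normal_space conv le"
  unfolding normal_space_def
proof (intro allI impI)
  fix x y z a assume H: "(\<forall>n. le (x n) (y n) \<and> le (y n) (z n)) \<and> conv x a \<and> conv z a"
  have "limitin (order_topology_of lt) y a sequentially" unfolding limitin_iff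
  proof (intro allI impI)
    fix p q assume "lt p a" "lt a q"
    then have "eventually (\<lambda>n. lt p (x n) \<and> lt (z n) q) sequentially"
      using H ev_lo ev_hi eventually_conj by blast
    then show "eventually (\<lambda>n. lt p (y n) \<and> lt (y n) q) sequentially"
      by (rule eventually_mono) (use H lt_le_trans le_lt_trans in blast)
  qed
  then show "conv y a" using h by blast
qed

lemma norm_normal:
  fixes M :: "'a \<Rightarrow> real"
  assumes "monotone_norm le M" "\<forall>x a. conv x a \<longleftrightarrow> (\<lambda>n. M (x n - a)) \<longlonglongrightarrow> 0"
  shows "normal_space conv le"
  unfolding normal_space_def
proof (intro allI impI)
  fix x y z a assume H: "(\<forall>n. le (x n) (y n) \<and> le (y n) (z n)) \<and> conv x a \<and> conv z a"
  have nn: "\<And>v. M v \<ge> 0" and sc: "\<And>c v. M (c *\<^sub>R v) = \<bar>c\<bar> * M v"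
    and tri: "\<And>u v. M (u + v) \<le> M u + M v"
    and mo: "\<And>u v. le 0 u \<Longrightarrow> le u v \<Longrightarrow> M u \<le> M v"
    using assms(1) unfolding monotone_norm_def is_norm_def by auto
  have sym: "M (u - v) = M (v - u)" for u v using sc[of "-1" "u - v"] by simp
  have tx: "(\<lambda>n. M (x n - a)) \<longlonglongrightarrow> 0" and tz: "(\<lambda>n. M (z n - a)) \<longlonglongrightarrow> 0" using H assms(2) by auto
  show "conv y a" unfolding assms(2)[rule_format]
  proof (rule tendsto_sandwich[OF _ _ tendsto_const])
    show "eventually (\<lambda>n. 0 \<le> M (y n - a)) sequentially" using nn by simp
    have "((\<lambda>n. M (z n - a) + 2 * M (x n - a)) \<longlongrightarrow> 0 + 2 * 0) sequentially"
      by (intro tendsto_intros tx tz)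
    then show "((\<lambda>n. M (z n - a) + 2 * M (x n - a)) \<longlongrightarrow> 0) sequentially" by simp
    have "M (y n - a) \<le> M (z n - a) + 2 * M (x n - a)" for n
    proof -
      have le0: "le 0 (y n - x n)" and le1: "le (y n - x n) (z n - x n)"
        using H le_iff_sub[of "x n" "y n"] le_add[of "y n" "z n" "- x n"] by auto
      have "M (y n - a) \<le> M (y n - x n) + M (x n - a)" using tri[of "y n - x n" "x n - a"] by simp
      also have "\<dots> \<le> M (z n - x n) + M (x n - a)" using mo[OF le0 le1] by simp
      also have "M (z n - x n) \<le> M (z n - a) + M (a - x n)" using tri[of "z n - a" "a - x n"] by simp
      finally show ?thesis using sym[of a "x n"] by simp
    qed
    then show "eventually (\<lambda>n. M (y n - a) \<le> M (z n - a) + 2 * M (x n - a)) sequentially" by simp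
  qed
qed

end

theorem theorem7p9:
  fixes conv :: "(nat \<Rightarrow> 'a::real_vector) \<Rightarrow> 'a \<Rightarrow> bool"
    and le lt :: "'a \<Rightarrow> 'a \<Rightarrow> bool"
  assumes "solid_vector_space conv le lt"
  shows "(normal_space conv le \<longleftrightarrow>
            (\<exists>N. monotone_norm le N \<and>
                 (\<forall>x a. conv x a \<longleftrightarrow> (\<lambda>n. N (x n - a)) \<longlonglongrightarrow> 0))) \<and>
         (normal_space conv le \<longleftrightarrow>
            (\<forall>x a. conv x a \<longleftrightarrow> limitin (order_topology_of lt) x a sequentially))"
proof -
  interpret S: svs conv le lt using assms by unfold_locales
  have 1: "normal_space conv le \<Longrightarrow> (\<exists>N. monotone_norm le N \<and>
                 (\<forall>x a. conv x a \<longleftrightarrow> (\<lambda>n. N (x n - a)) \<longlonglongrightarrow> 0))"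
    using S.N_monotone S.conv_N S.N_conv by blast
  have 2: "(\<exists>N. monotone_norm le N \<and>
                 (\<forall>x a. conv x a \<longleftrightarrow> (\<lambda>n. N (x n - a)) \<longlonglongrightarrow> 0)) \<Longrightarrow> normal_space conv le"
    using S.norm_normal by blast
  have 3: "normal_space conv le \<Longrightarrow>
            (\<forall>x a. conv x a \<longleftrightarrow> limitin (order_topology_of lt) x a sequentially)"
    using S.conv_limitin S.limitin_N S.N_conv by blast
  have 4: "(\<forall>x a. conv x a \<longleftrightarrow> limitin (order_topology_of lt) x a sequentially) \<Longrightarrow> normal_space conv le"
    using S.topo_normal by blast
  show ?thesis using 1 2 3 4 by blast
qed

end
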